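(* Let $P\subseteq\mathbb{R}^n$ be an $n$-dimensional rational polytope with irredundant description $P=\{x:\langle a_i,x\rangle\ge b_i,\ i=1,\dots,m\}$, and let $l$ be the common denominator of $b_1,\dots,b_m$. Then $\mathrm{int}(lP)\cap\mathbb{Z}^n=(lP)^{(1)}\cap\mathbb{Z}^n$. In particular, $\mu(P)\le l\,\mathrm{cd}(P)$.
   Context: In the irredundant description, $a_i\in(\mathbb{Z}^n)^*$ are primitive, $b_i\in\mathbb{Q}$, and each inequality defines a facet. For an $n$-dimensional rational polytope $Q$ with such a description, $d_Q(x):=\min_i(\langle a_i,x\rangle-b_i)$ and $Q^{(s)}:=\{x:d_Q(x)\ge s\}$; note $lP$ has description $\langle a_i,x\rangle\ge lb_i$. $\mu(P):=(\sup\{s>0:P^{(s)}\neq\emptyset\})^{-1}$ is the $\mathbb{Q}$-codegree, and the codegree is $\mathrm{cd}(P):=\min\{k\in\mathbb{Z}_{\ge1}:\mathrm{int}(kP)\cap\mathbb{Z}^n\neq\emptyset\}$. The common denominator of $b_1,\dots,b_m$ is the least positive integer $l$ with $lb_i\in\mathbb{Z}$ for all $i$. *)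

theory Defs
  imports "HOL-Analysis.Analysis"
begin

definition int_points :: "(real^'n) set" where
  "int_points = {x. \<forall>j. x $ j \<in> \<int>}"

definition primitive_int_vec :: "real^'n \<Rightarrow> bool" where
  "primitive_int_vec a \<longleftrightarrow> (\<forall>j. a $ j \<in> \<int>) \<and> a \<noteq> 0 \<and>
     (\<forall>d::int. d > 0 \<longrightarrow> (\<forall>j. a $ j / of_int d \<in> \<int>) \<longrightarrow> d = 1)"

definition desc_set :: "nat \<Rightarrow> (nat \<Rightarrow> real^'n) \<Rightarrow> (nat \<Rightarrow> real) \<Rightarrow> (real^'n) set" where
  "desc_set m a b = {x. \<forall>i<m. a i \<bullet> x \<ge> b i}"

text \<open>Irredundant description of an n-dimensional rational polytope: primitive integer
  normals, rational right-hand sides, each inequality defines a facet, no repetitions.\<close>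
definition irredundant_desc :: "(real^'n) set \<Rightarrow> nat \<Rightarrow> (nat \<Rightarrow> real^'n) \<Rightarrow> (nat \<Rightarrow> real) \<Rightarrow> bool" where
  "irredundant_desc P m a b \<longleftrightarrow>
     P = desc_set m a b \<and>
     (\<forall>i<m. primitive_int_vec (a i) \<and> b i \<in> \<rat>) \<and>
     (\<forall>i<m. aff_dim (P \<inter> {x. a i \<bullet> x = b i}) = int CARD('n) - 1) \<and>
     inj_on (\<lambda>i. (a i, b i)) {..<m}"

definition dist_fun :: "nat \<Rightarrow> (nat \<Rightarrow> real^'n) \<Rightarrow> (nat \<Rightarrow> real) \<Rightarrow> real^'n \<Rightarrow> real" where
  "dist_fun m a b x = Min ((\<lambda>i. a i \<bullet> x - b i) ` {..<m})"

definition inner_par :: "nat \<Rightarrow> (nat \<Rightarrow> real^'n) \<Rightarrow> (nat \<Rightarrow> real) \<Rightarrow> real \<Rightarrow> (real^'n) set" where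
  "inner_par m a b s = {x. dist_fun m a b x \<ge> s}"

definition Q_codegree :: "nat \<Rightarrow> (nat \<Rightarrow> real^'n) \<Rightarrow> (nat \<Rightarrow> real) \<Rightarrow> real" where
  "Q_codegree m a b = inverse (Sup {s. s > 0 \<and> inner_par m a b s \<noteq> {}})"

definition codegree :: "(real^'n) set \<Rightarrow> nat" where
  "codegree P = (LEAST k::nat. k \<ge> 1 \<and> interior ((\<lambda>x. real k *\<^sub>R x) ` P) \<inter> int_points \<noteq> {})"

definition common_denom :: "nat \<Rightarrow> (nat \<Rightarrow> real) \<Rightarrow> nat" where
  "common_denom m b = (LEAST l::nat. l > 0 \<and> (\<forall>i<m. real l * b i \<in> \<int>))"

end

theory Submission
  imports Defs
begin

lemma ints_gt_imp_ge1:
  fixes z w :: real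
  assumes "z \<in> \<int>" "w \<in> \<int>" "w < z"
  shows "w + 1 \<le> z"
proof -
  obtain p where p: "z = of_int p" using assms(1) Ints_cases by blast
  obtain q where q: "w = of_int q" using assms(2) Ints_cases by blast
  from assms(3) have "q < p" using p q by simp
  hence "q + 1 \<le> p" by simp
  thus ?thesis using p q by (metis of_int_1 of_int_add of_int_le_iff)
qed

lemma interior_halfspaces:
  fixes a :: "nat \<Rightarrow> real^'n"
  assumes "\<forall>i<m. a i \<noteq> 0"
  shows "interior {x. \<forall>i<m. c i \<le> a i \<bullet> x} = {x. \<forall>i<m. c i < a i \<bullet> x}"
proof
  have eq: "{x. \<forall>i<m. c i < a i \<bullet> x} = (\<Inter>i\<in>{..<m}. {x. a i \<bullet> x > c i})" by auto
  have "open {x. \<forall>i<m. c i < a i \<bullet> x}" unfolding eq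
    by (rule open_INT) (auto intro: open_halfspace_gt)
  thus "{x. \<forall>i<m. c i < a i \<bullet> x} \<subseteq> interior {x. \<forall>i<m. c i \<le> a i \<bullet> x}"
    by (intro interior_maximal) auto
next
  show "interior {x. \<forall>i<m. c i \<le> a i \<bullet> x} \<subseteq> {x. \<forall>i<m. c i < a i \<bullet> x}"
  proof
    fix x assume x: "x \<in> interior {x. \<forall>i<m. c i \<le> a i \<bullet> x}"
    then obtain e where e: "e > 0" "ball x e \<subseteq> {x. \<forall>i<m. c i \<le> a i \<bullet> x}"
      using mem_interior by blast
    show "x \<in> {x. \<forall>i<m. c i < a i \<bullet> x}"
    proof (clarify, rule ccontr)
      fix i assume i: "i < m" and n: "\<not> c i < a i \<bullet> x"
      have na: "norm (a i) > 0" using assms i by simp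
      define t where "t = e / (2 * norm (a i))"
      have t: "t > 0" using e na by (simp add: t_def)
      define z where "z = x - t *\<^sub>R a i"
      have "dist x z = t * norm (a i)" using t by (simp add: z_def dist_norm)
      also have "\<dots> = e / 2" using na by (simp add: t_def)
      finally have "z \<in> ball x e" using e by simp
      hence "c i \<le> a i \<bullet> z" using e i by auto
      moreover have "a i \<bullet> z = a i \<bullet> x - t * (norm (a i))^2"
        by (simp add: z_def inner_diff_right power2_norm_eq_inner)
      moreover have "t * (norm (a i))^2 > 0" using t na by simp
      ultimately show False using n by linarith
    qed
  qed
qed

lemma scaled_desc:
  fixes a :: "nat \<Rightarrow> real^'n"
  assumes "c > 0"
  shows "(\<lambda>x. c *\<^sub>R x) ` desc_set m a b = {x. \<forall>i<m. c * b i \<le> a i \<bullet> x}"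
proof
  show "(\<lambda>x. c *\<^sub>R x) ` desc_set m a b \<subseteq> {x. \<forall>i<m. c * b i \<le> a i \<bullet> x}"
    using assms by (auto simp: desc_set_def)
next
  show "{x. \<forall>i<m. c * b i \<le> a i \<bullet> x} \<subseteq> (\<lambda>x. c *\<^sub>R x) ` desc_set m a b"
  proof
    fix x assume x: "x \<in> {x. \<forall>i<m. c * b i \<le> a i \<bullet> x}"
    have "inverse c *\<^sub>R x \<in> desc_set m a b"
    proof -
      { fix i assume "i < m"
        hence "c * b i \<le> a i \<bullet> x" using x by auto
        hence "b i \<le> (a i \<bullet> x) / c" using assms by (simp add: field_simps)
        hence "b i \<le> a i \<bullet> (inverse c *\<^sub>R x)" by (simp add: field_simps) }
      thus ?thesis by (auto simp: desc_set_def)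
    qed
    moreover have "x = c *\<^sub>R (inverse c *\<^sub>R x)" using assms by simp
    ultimately show "x \<in> (\<lambda>x. c *\<^sub>R x) ` desc_set m a b" by blast
  qed
qed

lemma inner_ints:
  fixes a x :: "real^'n"
  assumes "\<forall>j. a $ j \<in> \<int>" "x \<in> int_points"
  shows "a \<bullet> x \<in> \<int>"
  using assms unfolding inner_vec_def int_points_def
  by (auto intro!: Ints_sum Ints_mult)

theorem lemma1p8:
  fixes P :: "(real^'n) set" and m :: nat and a :: "nat \<Rightarrow> real^'n" and b :: "nat \<Rightarrow> real"
  assumes "polytope P"
    and "interior P \<noteq> {}"
    and "irredundant_desc P m a b"
    and "l = common_denom m b"
  shows "interior ((\<lambda>x. real l *\<^sub>R x) ` P) \<inter> int_points
           = inner_par m a (\<lambda>i. real l * b i) 1 \<inter> int_points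
         \<and> Q_codegree m a b \<le> real l * real (codegree P)"
proof -
  have Pd: "P = desc_set m a b" and prim: "\<forall>i<m. primitive_int_vec (a i) \<and> b i \<in> \<rat>"
    using assms(3) unfolding irredundant_desc_def by auto
  have anz: "\<forall>i<m. a i \<noteq> 0" and aint: "\<forall>i<m. \<forall>j. a i $ j \<in> \<int>"
    using prim unfolding primitive_int_vec_def by auto
  have bP: "bounded P" using assms(1) polytope_imp_compact compact_imp_bounded by blast
  have m0: "m > 0"
  proof (rule ccontr)
    assume "\<not> m > 0"
    hence "P = UNIV" using Pd by (auto simp: desc_set_def)
    thus False using bP not_bounded_UNIV by metis
  qed
  have ne: "{..<m} \<noteq> {}" using m0 by auto
  have "\<forall>i<m. \<exists>q::nat. q > 0 \<and> real q * b i \<in> \<int>"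
  proof (intro allI impI)
    fix i assume "i < m"
    hence "b i \<in> \<rat>" using prim by auto
    then obtain p :: int and q :: nat where pq: "q > 0" "b i = of_int p / of_nat q"
      by (auto elim!: Rats_cases')
      (metis of_int_of_nat_eq zero_less_imp_eq_int)
    hence "real q * b i = of_int p" by simp
    thus "\<exists>q::nat. q > 0 \<and> real q * b i \<in> \<int>" using pq by auto
  qed
  then obtain q :: "nat \<Rightarrow> nat" where q: "\<forall>i<m. q i > 0 \<and> real (q i) * b i \<in> \<int>"
    by metis
  define l0 where "l0 = (\<Prod>i<m. q i)"
  have "l0 > 0 \<and> (\<forall>i<m. real l0 * b i \<in> \<int>)"
  proof
    show "l0 > 0" using q by (auto simp: l0_def)
    show "\<forall>i<m. real l0 * b i \<in> \<int>"
    proof (intro allI impI)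
      fix i assume i: "i < m"
      have "l0 = q i * (\<Prod>j\<in>{..<m}-{i}. q j)"
        unfolding l0_def using i by (simp add: prod.remove)
      hence "real l0 * b i = real (\<Prod>j\<in>{..<m}-{i}. q j) * (real (q i) * b i)"
        by (simp add: algebra_simps)
      moreover have "real (\<Prod>j\<in>{..<m}-{i}. q j) \<in> \<int>" by (rule Ints_of_nat)
      ultimately show "real l0 * b i \<in> \<int>" using q i by (metis Ints_mult)
    qed
  qed
  hence lprop: "l > 0 \<and> (\<forall>i<m. real l * b i \<in> \<int>)"
    unfolding assms(4) common_denom_def by (rule LeastI)
  have lpos: "real l > 0" using lprop by simp
  have lbint: "\<forall>i<m. real l * b i \<in> \<int>" using lprop by simp
  have intscale: "\<And>c. c > 0 \<Longrightarrow> interior ((\<lambda>x. c *\<^sub>R x) ` P) = {x. \<forall>i<m. c * b i < a i \<bullet> x}"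
  proof -
    fix c :: real assume c: "c > 0"
    show "interior ((\<lambda>x. c *\<^sub>R x) ` P) = {x. \<forall>i<m. c * b i < a i \<bullet> x}"
      using scaled_desc[OF c, of m a b] interior_halfspaces[OF anz, of "\<lambda>i. c * b i"] Pd by simp
  qed
  have ip: "\<And>c x. x \<in> inner_par m a c 1 \<longleftrightarrow> (\<forall>i<m. 1 \<le> a i \<bullet> x - c i)"
    using ne by (auto simp: inner_par_def dist_fun_def)
  have part1: "interior ((\<lambda>x. real l *\<^sub>R x) ` P) \<inter> int_points
           = inner_par m a (\<lambda>i. real l * b i) 1 \<inter> int_points"
  proof (rule set_eqI)
    fix x
    show "x \<in> interior ((\<lambda>x. real l *\<^sub>R x) ` P) \<inter> int_points \<longleftrightarrow>
          x \<in> inner_par m a (\<lambda>i. real l * b i) 1 \<inter> int_points"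
    proof (cases "x \<in> int_points")
      case True
      have "(\<forall>i<m. real l * b i < a i \<bullet> x) \<longleftrightarrow> (\<forall>i<m. 1 \<le> a i \<bullet> x - real l * b i)"
      proof (intro iffI allI impI)
        fix i assume H: "\<forall>i<m. real l * b i < a i \<bullet> x" and i: "i < m"
        have "real l * b i + 1 \<le> a i \<bullet> x"
          using ints_gt_imp_ge1[OF inner_ints[OF _ True]] aint lbint H i by blast
        thus "1 \<le> a i \<bullet> x - real l * b i" by simp
      next
        fix i assume H: "\<forall>i<m. 1 \<le> a i \<bullet> x - real l * b i" and i: "i < m"
        thus "real l * b i < a i \<bullet> x" using H i by force
      qed
      thus ?thesis using True intscale[OF lpos] ip by auto
    qed auto
  qed
  obtain p where p: "p \<in> interior P" using assms(2) by blast
  then obtain r where r: "r > 0" "ball p r \<subseteq> P" using mem_interior by blast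
  obtain k :: nat where k: "real k > real CARD('n) / r" using reals_Archimedean2 by blast
  have kpos: "k \<ge> 1"
  proof -
    have "real CARD('n) / r > 0" using r by simp
    thus ?thesis using k by (cases k) auto
  qed
  define y :: "real^'n" where "y = (\<chi> j. of_int (round (real k * p $ j)))"
  have yint: "y \<in> int_points" by (simp add: y_def int_points_def)
  have "norm (y - real k *\<^sub>R p) \<le> (\<Sum>j\<in>UNIV. \<bar>(y - real k *\<^sub>R p) $ j\<bar>)"
    by (rule norm_le_l1_cart)
  also have "\<dots> \<le> (\<Sum>j\<in>(UNIV::'n set). 1/2)"
  proof (rule sum_mono)
    fix j
    have "(y - real k *\<^sub>R p) $ j = of_int (round (real k * p $ j)) - real k * p $ j"
      by (simp add: y_def)
    thus "\<bar>(y - real k *\<^sub>R p) $ j\<bar> \<le> 1/2" using of_int_round_abs_le by metis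
  qed
  also have "\<dots> < real k * r"
  proof -
    have "real CARD('n) < real k * r" using k r by (simp add: field_simps)
    thus ?thesis by simp
  qed
  finally have ydist: "dist (real k *\<^sub>R p) y < real k * r" by (simp add: dist_norm norm_minus_commute)
  have "ball (real k *\<^sub>R p) (real k * r) \<subseteq> (\<lambda>x. real k *\<^sub>R x) ` P"
  proof
    fix z assume z: "z \<in> ball (real k *\<^sub>R p) (real k * r)"
    have kp: "real k > 0" using kpos by simp
    have "dist p (inverse (real k) *\<^sub>R z) = inverse (real k) * dist (real k *\<^sub>R p) z"
    proof -
      have "p - inverse (real k) *\<^sub>R z = inverse (real k) *\<^sub>R (real k *\<^sub>R p - z)"
        using kp by (simp add: algebra_simps)
      thus ?thesis using kp by (simp add: dist_norm)
    qed
    also have "\<dots> < r" using z kp by (simp add: field_simps)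
    finally have "inverse (real k) *\<^sub>R z \<in> P" using r by auto
    moreover have "z = real k *\<^sub>R (inverse (real k) *\<^sub>R z)" using kp by simp
    ultimately show "z \<in> (\<lambda>x. real k *\<^sub>R x) ` P" by blast
  qed
  hence "y \<in> interior ((\<lambda>x. real k *\<^sub>R x) ` P)"
  proof -
    assume H: "ball (real k *\<^sub>R p) (real k * r) \<subseteq> (\<lambda>x. real k *\<^sub>R x) ` P"
    have "ball (real k *\<^sub>R p) (real k * r) \<subseteq> interior ((\<lambda>x. real k *\<^sub>R x) ` P)"
      using H by (intro interior_maximal) auto
    moreover have "y \<in> ball (real k *\<^sub>R p) (real k * r)" using ydist by simp
    ultimately show ?thesis by blast
  qed
  hence ex: "\<exists>k::nat. k \<ge> 1 \<and> interior ((\<lambda>x. real k *\<^sub>R x) ` P) \<inter> int_points \<noteq> {}"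
    using kpos yint by blast
  define k0 where "k0 = codegree P"
  have k0: "k0 \<ge> 1 \<and> interior ((\<lambda>x. real k0 *\<^sub>R x) ` P) \<inter> int_points \<noteq> {}"
    unfolding k0_def codegree_def using ex by (rule LeastI_ex)
  have k0p: "real k0 > 0" using k0 by simp
  obtain x where x: "x \<in> interior ((\<lambda>x. real k0 *\<^sub>R x) ` P)" "x \<in> int_points" using k0 by blast
  have xgt: "\<forall>i<m. real k0 * b i < a i \<bullet> x" using x(1) intscale[OF k0p] by auto
  define S where "S = {s. s > 0 \<and> inner_par m a b s \<noteq> {}}"
  have inS: "1 / (real l * real k0) \<in> S"
  proof -
    have "\<forall>i<m. 1 / (real l * real k0) \<le> a i \<bullet> (inverse (real k0) *\<^sub>R x) - b i"
    proof (intro allI impI)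
      fix i assume i: "i < m"
      have "real l * (real k0 * b i) + 1 \<le> real l * (a i \<bullet> x)"
      proof (rule ints_gt_imp_ge1)
        show "real l * (a i \<bullet> x) \<in> \<int>"
          using inner_ints[OF _ x(2)] aint i by (simp add: Ints_mult)
        have "real l * (real k0 * b i) = real k0 * (real l * b i)" by simp
        moreover have "real k0 * (real l * b i) \<in> \<int>" using lbint i Ints_mult Ints_of_nat by blast
        ultimately show "real l * (real k0 * b i) \<in> \<int>" by (simp add: mult.left_commute)
        show "real l * (real k0 * b i) < real l * (a i \<bullet> x)" using xgt i lpos by simp
      qed
      hence "1 / real l \<le> a i \<bullet> x - real k0 * b i" using lpos by (simp add: field_simps)
      hence "1 / (real l * real k0) \<le> (a i \<bullet> x - real k0 * b i) / real k0"
        using k0p by (simp add: field_simps)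
      also have "\<dots> = a i \<bullet> (inverse (real k0) *\<^sub>R x) - b i" using k0p by (simp add: field_simps)
      finally show "1 / (real l * real k0) \<le> a i \<bullet> (inverse (real k0) *\<^sub>R x) - b i" .
    qed
    hence "inverse (real k0) *\<^sub>R x \<in> inner_par m a b (1 / (real l * real k0))"
      unfolding inner_par_def dist_fun_def using ne by simp
    thus ?thesis unfolding S_def using lpos k0p by auto
  qed
  obtain R where R: "\<forall>z\<in>P. norm z \<le> R" using bP bounded_iff by blast
  define M where "M = Max ((\<lambda>i. norm (a i)) ` {..<m})"
  have Mge: "\<forall>i<m. norm (a i) \<le> M" unfolding M_def by auto
  have Mpos: "M > 0" proof -
    have "norm (a 0) > 0" using anz m0 by simp
    thus ?thesis using Mge m0 by (meson order_less_le_trans)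
  qed
  have bdd: "bdd_above S"
  proof (rule bdd_aboveI)
    fix s assume "s \<in> S"
    then obtain w where s: "s > 0" "w \<in> inner_par m a b s" unfolding S_def by blast
    have w: "\<forall>i<m. s \<le> a i \<bullet> w - b i" using s(2) ne by (auto simp: inner_par_def dist_fun_def)
    have inP: "z \<in> P" if "norm (z - w) \<le> s / M" for z
    proof -
      { fix i assume i: "i < m"
        have "\<bar>a i \<bullet> (z - w)\<bar> \<le> norm (a i) * norm (z - w)" by (rule Cauchy_Schwarz_ineq2)
        also have "\<dots> \<le> M * (s / M)"
          using Mge i that Mpos by (intro mult_mono) auto
        also have "\<dots> = s" using Mpos by simp
        finally have "a i \<bullet> w - a i \<bullet> z \<le> s" by (simp add: inner_diff_right abs_le_iff)
        moreover have "s \<le> a i \<bullet> w - b i" using w i by blast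
        ultimately have "b i \<le> a i \<bullet> z" by linarith }
      thus ?thesis using Pd by (auto simp: desc_set_def)
    qed
    define e :: "real^'n" where "e = axis undefined 1"
    have ne: "norm e = 1" by (simp add: e_def)
    have z1: "norm (w + (s / M) *\<^sub>R e) \<le> R" using R inP[of "w + (s / M) *\<^sub>R e"] ne s Mpos by simp
    have z2: "norm (w - (s / M) *\<^sub>R e) \<le> R" using R inP[of "w - (s / M) *\<^sub>R e"] ne s Mpos by simp
    have "2 * (s / M) = norm ((w + (s / M) *\<^sub>R e) - (w - (s / M) *\<^sub>R e))"
    proof -
      have "(w + (s / M) *\<^sub>R e) - (w - (s / M) *\<^sub>R e) = (s / M) *\<^sub>R e + (s / M) *\<^sub>R e"
        by (simp add: algebra_simps del: scaleR_2)
      also have "\<dots> = (s / M + s / M) *\<^sub>R e" by (rule scaleR_add_left[symmetric])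
      also have "\<dots> = (2 * (s / M)) *\<^sub>R e" by simp
      finally have "(w + (s / M) *\<^sub>R e) - (w - (s / M) *\<^sub>R e) = (2 * (s / M)) *\<^sub>R e" .
      thus ?thesis using ne s Mpos by simp
    qed
    also have "\<dots> \<le> 2 * R" using norm_triangle_ineq4 z1 z2 by (smt (verit))
    finally have "s / M \<le> R" by simp
    thus "s \<le> R * M" using Mpos by (simp add: field_simps)
  qed
  have "1 / (real l * real k0) \<le> Sup S" using cSup_upper[OF inS bdd] .
  hence "inverse (Sup S) \<le> inverse (1 / (real l * real k0))"
    using lpos k0p by (intro le_imp_inverse_le) auto
  hence "Q_codegree m a b \<le> real l * real k0"
    unfolding Q_codegree_def S_def by simp
  thus ?thesis using part1 k0_def by simp
qed

end
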